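(* Let $G$, $H$, the supervisors with $\Sigma_{o,i},\Sigma_{c,i},N_{o,i}$, a controllable event $\sigma\in\Sigma_c$, $N=\max\{N_{o,i}:i\in I^c(\sigma)\}$, and the verifiers $V^k_\sigma$ with reachable state sets $X^k_\sigma$ be as in the context. Then for every $k\in\{0,1,\dots,N-1\}$ the following are equivalent: (a) for every $s\in\mathcal{L}(H)$ with $|s|=k$, if $s\sigma\in\mathcal{L}(G)\setminus\mathcal{L}(H)$ then for every $(s_i)_{i\in I^c(\sigma)}\in\mathcal{T}^{\sigma}_{conf}(s)$ there exists $i\in I^c(\sigma)$ with $s_i\sigma\notin\mathcal{L}(H^{aug}_{N_{o,i}})$; (b) there is no state $(q,(q_i)_{i\in I^c(\sigma)},k)\in X^k_\sigma$ with $\sigma\in\Gamma(q)\setminus\Gamma_H(q)$ and $\sigma\in\Gamma^{aug}_{H,N_{o,i}}(q_i)$ for all $i\in I^c(\sigma)$.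
   Context: $G=(Q,\Sigma,\delta,\Gamma,q_0,Q_m)$ is a deterministic finite automaton (transition function extended to strings; $\Gamma(q)$ = set of events defined at $q$; $\mathcal{L}(G)$ its generated language). $H=(Q_H,\Sigma,\delta_H,\Gamma_H,q_0,Q_{m,H})$ is a sub-automaton of $G$ (obtained by deleting states of $G$ and their attached transitions). For a string $s$, $|s|$ is its length, $s_{-m}$ is its prefix of length $\max\{0,|s|-m\}$, $\Sigma^{\le M}$ is the set of strings of length at most $M$. Supervisors $I=\{1,\dots,n\}$: supervisor $i$ has observable events $\Sigma_{o,i}$, $\Sigma_{uo,i}=\Sigma\setminus\Sigma_{o,i}$, controllable events $\Sigma_{c,i}$, delay bound $N_{o,i}\in\mathbb{N}$; $\Sigma_c=\bigcup_i\Sigma_{c,i}$, $I^c(\sigma)=\{i:\sigma\in\Sigma_{c,i}\}$. $P_i$ is natural projection onto $\Sigma_{o,i}^*$; $\Theta_i^{N_{o,i}}(s)=\{P_i(s_{-m}):0\le m\le N_{o,i}\}$. For $s\in\mathcal{L}(H)$, $\mathcal{T}^\sigma_{conf}(s)$ is the set of tuples $(s_i)_{i\in I^c(\sigma)}$ with $P_i(s_i)\in\Theta_i^{N_{o,i}}(s)$ for all $i\in I^c(\sigma)$. Augmented automaton $H^{aug}_N$: states $Q_H\cup\{q_{dis}\}$, initial state $q_0$; for $q\in Q_H$, $e\in\Sigma$: $\delta^{aug}(q,e)=\delta_H(q,e)$ if $e\in\Gamma_H(q)$, $=q_{dis}$ if $e\notin\Gamma_H(q)$ and $e\in\Gamma_H(\delta_H(q,s'))$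 for some $s'\in\Sigma^{\le N}$ with $\delta_H(q,s')$ defined, undefined otherwise; $q_{dis}$ has no outgoing transitions; $\Gamma^{aug}_{H,N}(q)$ is the set of events defined at $q$ in $H^{aug}_N$. Verifier $V^k_\sigma$ ($0\le k\le N-1$): states are tuples $(q,(q_i)_{i\in I^c(\sigma)},d)$ with $q,q_i\in Q_H$, $d\in[0,k]$; initial state $(q_0,(q_0)_{i},0)$. At a state $(q,(q_i)_i,d)$ and for $e\in\Sigma$, each $i\in I^c(\sigma)$ falls in one case: C1: $k-d>N_{o,i}$, $e\in\Sigma_{o,i}$; C2: $k-d>N_{o,i}$, $e\in\Sigma_{uo,i}$; C3: $k-d\le N_{o,i}$, $\sigma\notin\Gamma^{aug}_{H,N_{o,i}}(q_i)$, $e\in\Sigma_{o,i}$; C4: $k-d\le N_{o,i}$, $\sigma\notin\Gamma^{aug}_{H,N_{o,i}}(q_i)$, $e\in\Sigma_{uo,i}$; C5: $k-d\le N_{o,i}$, $\sigma\in\Gamma^{aug}_{H,N_{o,i}}(q_i)$. Type-1 transition: if $d+1\le k$, $\delta_H(q,e)$ is defined, and $\delta_H(q_i,e)$ is defined for every $i$ in case C1 or C3, there is a transition to $(\delta_H(q,e),(q_i')_i,d+1)$ where $q_i'=\delta_H(q_i,e)$ for $i$ in C1 or C3 and $q_i'=q_i$ for $i$ in C2, C4 or C5. Type-2 transition: for each $i$ in case C2 or C4 with $\delta_H(q_i,e)$ defined, there is a transition to the state obtained by replacing $q_i$ by $\delta_H(q_i,e)$ (all other components, including $q$ and $d$, unchanged).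 $X^k_\sigma$ is the set of states reachable from the initial state. *)

theory Defs
  imports Main
begin

(* A DFA G over event type 'e (Sigma = UNIV) with state type 'q is given by its
   partial transition function delta :: 'q => 'e => 'q option and initial state q0.
   Marked states play no role in the statement and are omitted. *)

fun ext_delta :: "('q \<Rightarrow> 'e \<Rightarrow> 'q option) \<Rightarrow> 'q \<Rightarrow> 'e list \<Rightarrow> 'q option" where
  "ext_delta d q [] = Some q"
| "ext_delta d q (e # s) = (case d q e of None \<Rightarrow> None | Some q' \<Rightarrow> ext_delta d q' s)"

definition lang :: "('q \<Rightarrow> 'e \<Rightarrow> 'q option) \<Rightarrow> 'q \<Rightarrow> 'e list set" where
  "lang d q0 = {s. ext_delta d q0 s \<noteq> None}"

definition active :: "('q \<Rightarrow> 'e \<Rightarrow> 'q option) \<Rightarrow> 'q \<Rightarrow> 'e set" where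
  "active d q = {e. d q e \<noteq> None}"

(* sub-automaton H of G obtained by keeping only the states in QH *)
definition sub_delta :: "('q \<Rightarrow> 'e \<Rightarrow> 'q option) \<Rightarrow> 'q set \<Rightarrow> 'q \<Rightarrow> 'e \<Rightarrow> 'q option" where
  "sub_delta d QH q e =
     (if q \<in> QH then (case d q e of None \<Rightarrow> None | Some q' \<Rightarrow> if q' \<in> QH then Some q' else None)
      else None)"

definition proj :: "'e set \<Rightarrow> 'e list \<Rightarrow> 'e list" where
  "proj So s = filter (\<lambda>e. e \<in> So) s"

definition trunc :: "'e list \<Rightarrow> nat \<Rightarrow> 'e list" where
  "trunc s m = take (length s - m) s"

definition Theta :: "'e set \<Rightarrow> nat \<Rightarrow> 'e list \<Rightarrow> 'e list set" where
  "Theta So No s = {proj So (trunc s m) | m. m \<le> No}"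

(* tuples (s_i)_{i in Ic} represented as functions on the index set (values outside Ic irrelevant) *)
definition T_conf :: "(nat \<Rightarrow> 'e set) \<Rightarrow> (nat \<Rightarrow> nat) \<Rightarrow> nat set \<Rightarrow> 'e list \<Rightarrow> (nat \<Rightarrow> 'e list) set" where
  "T_conf So No Ic s = {ss. \<forall>i\<in>Ic. proj (So i) (ss i) \<in> Theta (So i) (No i) s}"

(* augmented automaton H^aug_N : states Q_H plus q_dis *)
datatype 'q aug_state = St 'q | Dis

definition aug_delta :: "('q \<Rightarrow> 'e \<Rightarrow> 'q option) \<Rightarrow> nat \<Rightarrow> 'q aug_state \<Rightarrow> 'e \<Rightarrow> 'q aug_state option" where
  "aug_delta dH N x e =
     (case x of
        Dis \<Rightarrow> None
      | St q \<Rightarrow>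
          (if dH q e \<noteq> None then map_option St (dH q e)
           else if (\<exists>s'. length s' \<le> N \<and>
                     (case ext_delta dH q s' of None \<Rightarrow> False | Some q' \<Rightarrow> dH q' e \<noteq> None))
                then Some Dis else None))"

definition lang_aug :: "('q \<Rightarrow> 'e \<Rightarrow> 'q option) \<Rightarrow> 'q \<Rightarrow> nat \<Rightarrow> 'e list set" where
  "lang_aug dH q0 N = lang (aug_delta dH N) (St q0)"

definition Gamma_aug :: "('q \<Rightarrow> 'e \<Rightarrow> 'q option) \<Rightarrow> nat \<Rightarrow> 'q \<Rightarrow> 'e set" where
  "Gamma_aug dH N q = active (aug_delta dH N) (St q)"

definition caseC1 :: "(nat \<Rightarrow> 'e set) \<Rightarrow> (nat \<Rightarrow> nat) \<Rightarrow> nat \<Rightarrow> nat \<Rightarrow> nat \<Rightarrow> 'e \<Rightarrow> bool" where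
  "caseC1 So No k d i e \<longleftrightarrow> int k - int d > int (No i) \<and> e \<in> So i"
definition caseC2 :: "(nat \<Rightarrow> 'e set) \<Rightarrow> (nat \<Rightarrow> nat) \<Rightarrow> nat \<Rightarrow> nat \<Rightarrow> nat \<Rightarrow> 'e \<Rightarrow> bool" where
  "caseC2 So No k d i e \<longleftrightarrow> int k - int d > int (No i) \<and> e \<notin> So i"
definition caseC3 :: "('q \<Rightarrow> 'e \<Rightarrow> 'q option) \<Rightarrow> (nat \<Rightarrow> 'e set) \<Rightarrow> (nat \<Rightarrow> nat) \<Rightarrow> 'e \<Rightarrow> nat \<Rightarrow> nat \<Rightarrow> nat \<Rightarrow> 'q \<Rightarrow> 'e \<Rightarrow> bool" where
  "caseC3 dH So No \<sigma> k d i qi e \<longleftrightarrow> int k - int d \<le> int (No i) \<and> \<sigma> \<notin> Gamma_aug dH (No i) qi \<and> e \<in> So i"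
definition caseC4 :: "('q \<Rightarrow> 'e \<Rightarrow> 'q option) \<Rightarrow> (nat \<Rightarrow> 'e set) \<Rightarrow> (nat \<Rightarrow> nat) \<Rightarrow> 'e \<Rightarrow> nat \<Rightarrow> nat \<Rightarrow> nat \<Rightarrow> 'q \<Rightarrow> 'e \<Rightarrow> bool" where
  "caseC4 dH So No \<sigma> k d i qi e \<longleftrightarrow> int k - int d \<le> int (No i) \<and> \<sigma> \<notin> Gamma_aug dH (No i) qi \<and> e \<notin> So i"

(* reachable states X^k_sigma of the verifier V^k_sigma.  Components of the tuple
   outside Ic are kept constant (equal to q0) and play no role. *)
inductive_set verif_reach ::
  "('q \<Rightarrow> 'e \<Rightarrow> 'q option) \<Rightarrow> 'q \<Rightarrow> (nat \<Rightarrow> 'e set) \<Rightarrow> (nat \<Rightarrow> nat) \<Rightarrow> nat set \<Rightarrow> 'e \<Rightarrow> nat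
   \<Rightarrow> ('q \<times> (nat \<Rightarrow> 'q) \<times> nat) set"
  for dH q0 So No Ic \<sigma> k where
  init: "(q0, (\<lambda>i. q0), 0) \<in> verif_reach dH q0 So No Ic \<sigma> k"
| type1: "\<lbrakk> (q, qs, d) \<in> verif_reach dH q0 So No Ic \<sigma> k; d + 1 \<le> k; dH q e = Some q';
           \<forall>i\<in>Ic. (caseC1 So No k d i e \<or> caseC3 dH So No \<sigma> k d i (qs i) e) \<longrightarrow> dH (qs i) e \<noteq> None \<rbrakk>
   \<Longrightarrow> (q', (\<lambda>i. if i \<in> Ic \<and> (caseC1 So No k d i e \<or> caseC3 dH So No \<sigma> k d i (qs i) e)
                  then the (dH (qs i) e) else qs i), d + 1) \<in> verif_reach dH q0 So No Ic \<sigma> k"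
| type2: "\<lbrakk> (q, qs, d) \<in> verif_reach dH q0 So No Ic \<sigma> k; i \<in> Ic;
           caseC2 So No k d i e \<or> caseC4 dH So No \<sigma> k d i (qs i) e; dH (qs i) e = Some qi' \<rbrakk>
   \<Longrightarrow> (q, qs(i := qi'), d) \<in> verif_reach dH q0 So No Ic \<sigma> k"

end

theory Submission
  imports Defs
begin

lemma ext_append: "ext_delta d q (a @ b) = (case ext_delta d q a of None \<Rightarrow> None | Some q' \<Rightarrow> ext_delta d q' b)"
  by (induction a arbitrary: q) (auto split: option.splits)

lemma ext_snoc: "ext_delta d q (a @ [e]) = (case ext_delta d q a of None \<Rightarrow> None | Some q' \<Rightarrow> d q' e)"
  by (simp add: ext_append split: option.splits)

lemma ext_prefix: "ext_delta d q (a @ b) \<noteq> None \<Longrightarrow> ext_delta d q a \<noteq> None"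
  by (simp add: ext_append split: option.splits)

lemma ext_take: "ext_delta d q s \<noteq> None \<Longrightarrow> ext_delta d q (take l s) \<noteq> None"
  by (metis append_take_drop_id ext_prefix)

lemma ext_take_Suc:
  assumes "ext_delta d q s \<noteq> None" "l < length s" "ext_delta d q (take l s) = Some x"
  shows "\<exists>y. d x (s ! l) = Some y \<and> ext_delta d q (take (Suc l) s) = Some y"
proof -
  have "ext_delta d q (take (Suc l) s) \<noteq> None" by (rule ext_take[OF assms(1)])
  then show ?thesis using assms(2,3) by (auto simp: take_Suc_conv_app_nth ext_snoc split: option.splits)
qed

lemma proj_append[simp]: "proj So (a @ b) = proj So a @ proj So b"
  by (simp add: proj_def)
lemma proj_Nil[simp]: "proj So [] = []" by (simp add: proj_def)
lemma proj_Cons: "proj So (e # b) = (if e \<in> So then e # proj So b else proj So b)"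
  by (simp add: proj_def)

lemma proj_take_len: "length (proj So (take j xs)) \<le> length (proj So xs)"
  by (metis append_take_drop_id length_append le_add1 proj_append)

lemma proj_take_mono: "j \<le> j' \<Longrightarrow> length (proj So (take j xs)) \<le> length (proj So (take j' xs))"
  by (metis min.absorb1 proj_take_len take_take)

lemma sub_ext: "ext_delta (sub_delta \<delta> QH) q s = Some x \<Longrightarrow> ext_delta \<delta> q s = Some x"
proof (induction s arbitrary: q)
  case Nil then show ?case by simp
next
  case (Cons e s)
  then show ?case by (auto simp: sub_delta_def split: option.splits if_splits)
qed

lemma aug_Dis: "ext_delta (aug_delta dH N) Dis s = None \<or> ext_delta (aug_delta dH N) Dis s = Some Dis"
  by (cases s) (auto simp: aug_delta_def)

lemma aug_St: "ext_delta (aug_delta dH N) (St q) s = Some (St x) \<longleftrightarrow> ext_delta dH q s = Some x"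
proof (induction s arbitrary: q)
  case Nil then show ?case by simp
next
  case (Cons e s)
  show ?case
  proof (cases "dH q e")
    case None
    have "ext_delta (aug_delta dH N) (St q) (e # s) \<noteq> Some (St x)"
      using None aug_Dis[of dH N s] by (auto simp: aug_delta_def split: option.splits)
    then show ?thesis using None by simp
  next
    case (Some a)
    then show ?thesis using Cons by (simp add: aug_delta_def)
  qed
qed

lemma lang_aug_snoc:
  "s @ [\<sigma>] \<in> lang_aug dH q0 N \<longleftrightarrow> (\<exists>x. ext_delta dH q0 s = Some x \<and> \<sigma> \<in> Gamma_aug dH N x)"
proof -
  have "s @ [\<sigma>] \<in> lang_aug dH q0 N \<longleftrightarrow> (\<exists>y. ext_delta (aug_delta dH N) (St q0) s = Some y \<and> aug_delta dH N y \<sigma> \<noteq> None)"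
    by (auto simp: lang_aug_def lang_def ext_snoc split: option.splits)
  also have "\<dots> \<longleftrightarrow> (\<exists>x. ext_delta (aug_delta dH N) (St q0) s = Some (St x) \<and> aug_delta dH N (St x) \<sigma> \<noteq> None)"
  proof
    assume "\<exists>y. ext_delta (aug_delta dH N) (St q0) s = Some y \<and> aug_delta dH N y \<sigma> \<noteq> None"
    then obtain y where y: "ext_delta (aug_delta dH N) (St q0) s = Some y" "aug_delta dH N y \<sigma> \<noteq> None" by blast
    then show "\<exists>x. ext_delta (aug_delta dH N) (St q0) s = Some (St x) \<and> aug_delta dH N (St x) \<sigma> \<noteq> None"
      by (cases y) (auto simp: aug_delta_def)
  next
    assume "\<exists>x. ext_delta (aug_delta dH N) (St q0) s = Some (St x) \<and> aug_delta dH N (St x) \<sigma> \<noteq> None"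
    then show "\<exists>y. ext_delta (aug_delta dH N) (St q0) s = Some y \<and> aug_delta dH N y \<sigma> \<noteq> None" by blast
  qed
  also have "\<dots> \<longleftrightarrow> (\<exists>x. ext_delta dH q0 s = Some x \<and> \<sigma> \<in> Gamma_aug dH N x)"
    by (simp add: aug_St Gamma_aug_def active_def)
  finally show ?thesis .
qed


lemma inv:
  assumes "(q, qs, d) \<in> verif_reach dH q0 So No Ic \<sigma> k"
  shows "\<exists>s. length s = d \<and> ext_delta dH q0 s = Some q \<and>
     (\<forall>i\<in>Ic. \<exists>t. ext_delta dH q0 t = Some (qs i) \<and>
        (proj (So i) t = proj (So i) s \<or>
         (\<sigma> \<in> Gamma_aug dH (No i) (qs i) \<and>
          (\<exists>j\<le>d. int k - int j \<le> int (No i) \<and> proj (So i) t = proj (So i) (take j s)))))"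
  using assms
proof (induction rule: verif_reach.induct)
  case init
  show ?case by (rule exI[of _ "[]"]) (auto intro!: exI[of _ "[]"])
next
  case (type1 q qs d e q')
  then obtain s where s: "length s = d" "ext_delta dH q0 s = Some q"
    and T: "\<forall>i\<in>Ic. \<exists>t. ext_delta dH q0 t = Some (qs i) \<and>
        (proj (So i) t = proj (So i) s \<or>
         (\<sigma> \<in> Gamma_aug dH (No i) (qs i) \<and>
          (\<exists>j\<le>d. int k - int j \<le> int (No i) \<and> proj (So i) t = proj (So i) (take j s))))"
    by blast
  let ?c = "\<lambda>i. caseC1 So No k d i e \<or> caseC3 dH So No \<sigma> k d i (qs i) e"
  let ?qs' = "\<lambda>i. if i \<in> Ic \<and> ?c i then the (dH (qs i) e) else qs i"
  have "\<forall>i\<in>Ic. \<exists>t. ext_delta dH q0 t = Some (?qs' i) \<and>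
        (proj (So i) t = proj (So i) (s @ [e]) \<or>
         (\<sigma> \<in> Gamma_aug dH (No i) (?qs' i) \<and>
          (\<exists>j\<le>d+1. int k - int j \<le> int (No i) \<and> proj (So i) t = proj (So i) (take j (s @ [e])))))"
  proof
    fix i assume i: "i \<in> Ic"
    then obtain t where t: "ext_delta dH q0 t = Some (qs i)" and
      D: "proj (So i) t = proj (So i) s \<or>
         (\<sigma> \<in> Gamma_aug dH (No i) (qs i) \<and>
          (\<exists>j\<le>d. int k - int j \<le> int (No i) \<and> proj (So i) t = proj (So i) (take j s)))"
      using T by blast
    show "\<exists>t. ext_delta dH q0 t = Some (?qs' i) \<and>
        (proj (So i) t = proj (So i) (s @ [e]) \<or>
         (\<sigma> \<in> Gamma_aug dH (No i) (?qs' i) \<and>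
          (\<exists>j\<le>d+1. int k - int j \<le> int (No i) \<and> proj (So i) t = proj (So i) (take j (s @ [e])))))"
    proof (cases "?c i")
      case True
      then have eo: "e \<in> So i" by (auto simp: caseC1_def caseC3_def)
      from type1.hyps(4) i True obtain y where y: "dH (qs i) e = Some y" by blast
      have "proj (So i) t = proj (So i) s"
        using D True by (auto simp: caseC1_def caseC3_def)
      then have "ext_delta dH q0 (t @ [e]) = Some (?qs' i) \<and> proj (So i) (t @ [e]) = proj (So i) (s @ [e])"
        using t y True i eo by (simp add: ext_snoc proj_def)
      then show ?thesis by blast
    next
      case False
      then have q': "?qs' i = qs i" by simp
      show ?thesis
      proof (cases "proj (So i) t = proj (So i) s")
        case True
        show ?thesis
        proof (cases "e \<in> So i")
          case False
          then show ?thesis using t True q' by (auto simp: proj_def)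
        next
          case eo: True
          then have "int k - int d \<le> int (No i)" "\<sigma> \<in> Gamma_aug dH (No i) (qs i)"
            using False by (auto simp: caseC1_def caseC3_def)
          then show ?thesis using t True q' s(1)
            by (intro exI[of _ t]) (auto intro!: exI[of _ d])
        qed
      next
        case False
        then obtain j where "\<sigma> \<in> Gamma_aug dH (No i) (qs i)" "j \<le> d" "int k - int j \<le> int (No i)"
          "proj (So i) t = proj (So i) (take j s)" using D by blast
        then show ?thesis using t q' s(1)
          by (intro exI[of _ t]) (auto intro!: exI[of _ j])
      qed
    qed
  qed
  then show ?case using s type1.hyps(3)
    by (intro exI[of _ "s @ [e]"]) (simp add: ext_snoc)
next
  case (type2 q qs d i e qi')
  then obtain s where s: "length s = d" "ext_delta dH q0 s = Some q"
    and T: "\<forall>i\<in>Ic. \<exists>t. ext_delta dH q0 t = Some (qs i) \<and>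
        (proj (So i) t = proj (So i) s \<or>
         (\<sigma> \<in> Gamma_aug dH (No i) (qs i) \<and>
          (\<exists>j\<le>d. int k - int j \<le> int (No i) \<and> proj (So i) t = proj (So i) (take j s))))"
    by blast
  have "\<forall>i'\<in>Ic. \<exists>t. ext_delta dH q0 t = Some ((qs(i := qi')) i') \<and>
        (proj (So i') t = proj (So i') s \<or>
         (\<sigma> \<in> Gamma_aug dH (No i') ((qs(i := qi')) i') \<and>
          (\<exists>j\<le>d. int k - int j \<le> int (No i') \<and> proj (So i') t = proj (So i') (take j s))))"
  proof
    fix i' assume i': "i' \<in> Ic"
    show "\<exists>t. ext_delta dH q0 t = Some ((qs(i := qi')) i') \<and>
        (proj (So i') t = proj (So i') s \<or>
         (\<sigma> \<in> Gamma_aug dH (No i') ((qs(i := qi')) i') \<and>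
          (\<exists>j\<le>d. int k - int j \<le> int (No i') \<and> proj (So i') t = proj (So i') (take j s))))"
    proof (cases "i' = i")
      case False then show ?thesis using T i' by simp
    next
      case True
      obtain t where t: "ext_delta dH q0 t = Some (qs i)" and
        D: "proj (So i) t = proj (So i) s \<or>
           (\<sigma> \<in> Gamma_aug dH (No i) (qs i) \<and>
            (\<exists>j\<le>d. int k - int j \<le> int (No i) \<and> proj (So i) t = proj (So i) (take j s)))"
        using T type2.hyps(2) by blast
      have eu: "e \<notin> So i" using type2.hyps(3) by (auto simp: caseC2_def caseC4_def)
      have "proj (So i) t = proj (So i) s"
        using D type2.hyps(3) by (auto simp: caseC2_def caseC4_def)
      then have "ext_delta dH q0 (t @ [e]) = Some qi' \<and> proj (So i) (t @ [e]) = proj (So i) s"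
        using t type2.hyps(4) eu by (simp add: ext_snoc proj_def)
      then show ?thesis using True by auto
    qed
  qed
  then show ?case using s by blast
qed


locale dir2 =
  fixes dH :: "'q \<Rightarrow> 'e \<Rightarrow> 'q option" and q0 :: 'q and So :: "nat \<Rightarrow> 'e set"
    and No :: "nat \<Rightarrow> nat" and Ic :: "nat set" and \<sigma> :: 'e and k :: nat
    and s :: "'e list" and ss :: "nat \<Rightarrow> 'e list" and J :: "nat \<Rightarrow> nat" and nb :: nat
  assumes lens: "length s = k"
    and sH: "ext_delta dH q0 s \<noteq> None"
    and ssH: "\<forall>i\<in>Ic. \<exists>x. ext_delta dH q0 (ss i) = Some x \<and> \<sigma> \<in> Gamma_aug dH (No i) x"
    and projJ: "\<forall>i\<in>Ic. proj (So i) (ss i) = proj (So i) (take (J i) s) \<and> int k - int (J i) \<le> int (No i)"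
    and bnd: "\<forall>i\<in>Ic. i < nb"
begin

abbreviation "R \<equiv> verif_reach dH q0 So No Ic \<sigma> k"

definition frozen where "frozen i d x \<longleftrightarrow> int k - int d \<le> int (No i) \<and> \<sigma> \<in> Gamma_aug dH (No i) x"
definition norm where "norm i d x \<longleftrightarrow> frozen i d x \<or>
  (\<exists>l \<le> length (ss i). ext_delta dH q0 (take l (ss i)) = Some x \<and> proj (So i) (take l (ss i)) = proj (So i) (take d s))"
definition ready where "ready i d x \<longleftrightarrow> frozen i d x \<or>
  (\<exists>l \<le> length (ss i). ext_delta dH q0 (take l (ss i)) = Some x \<and> proj (So i) (take l (ss i)) = proj (So i) (take d s)
     \<and> (l = length (ss i) \<or> ss i ! l \<in> So i))"

lemma ssD: "i \<in> Ic \<Longrightarrow> ext_delta dH q0 (ss i) \<noteq> None" using ssH by auto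

lemma stepA_aux:
  "i \<in> Ic \<Longrightarrow> length (ss i) - l = m \<Longrightarrow> (q, qs, d) \<in> R \<Longrightarrow> l \<le> length (ss i) \<Longrightarrow>
   ext_delta dH q0 (take l (ss i)) = Some (qs i) \<Longrightarrow> proj (So i) (take l (ss i)) = proj (So i) (take d s) \<Longrightarrow>
   \<exists>x. (q, qs(i := x), d) \<in> R \<and> ready i d x"
proof (induction m arbitrary: l qs)
  case 0
  then have "l = length (ss i)" by simp
  then show ?case using 0 by (intro exI[of _ "qs i"]) (auto simp: ready_def)
next
  case (Suc m)
  show ?case
  proof (cases "ss i ! l \<in> So i \<or> frozen i d (qs i)")
    case True
    then show ?thesis using Suc.prems by (intro exI[of _ "qs i"]) (auto simp: ready_def)
  next
    case False
    have ll: "l < length (ss i)" using Suc.prems by simp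
    obtain y where y: "dH (qs i) (ss i ! l) = Some y" "ext_delta dH q0 (take (Suc l) (ss i)) = Some y"
      using ext_take_Suc[OF ssD[OF Suc.prems(1)] ll Suc.prems(5)] by blast
    have "caseC2 So No k d i (ss i ! l) \<or> caseC4 dH So No \<sigma> k d i (qs i) (ss i ! l)"
      using False by (auto simp: caseC2_def caseC4_def frozen_def)
    then have R1: "(q, qs(i := y), d) \<in> R"
      using verif_reach.type2[OF Suc.prems(3) Suc.prems(1) _ y(1)] by blast
    have "proj (So i) (take (Suc l) (ss i)) = proj (So i) (take d s)"
      using False Suc.prems(6) ll by (simp add: take_Suc_conv_app_nth proj_def)
    moreover have "(qs(i := y)) i = y" by simp
    ultimately obtain x where "(q, (qs(i := y))(i := x), d) \<in> R \<and> ready i d x"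
      using Suc.IH[of "Suc l" "qs(i := y)"] Suc.prems R1 ll y(2) by (metis Suc_diff_Suc Suc_leI nat.inject)
    then show ?thesis by (metis fun_upd_upd)
  qed
qed

lemma stepA: "(q, qs, d) \<in> R \<Longrightarrow> i \<in> Ic \<Longrightarrow> norm i d (qs i) \<Longrightarrow> \<exists>x. (q, qs(i := x), d) \<in> R \<and> ready i d x"
  unfolding norm_def
proof (elim disjE exE conjE)
  assume "(q, qs, d) \<in> R" "frozen i d (qs i)"
  then show ?thesis by (intro exI[of _ "qs i"]) (auto simp: ready_def)
next
  fix l assume "(q, qs, d) \<in> R" "i \<in> Ic" "l \<le> length (ss i)" "ext_delta dH q0 (take l (ss i)) = Some (qs i)"
    "proj (So i) (take l (ss i)) = proj (So i) (take d s)"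
  then show ?thesis using stepA_aux by blast
qed

lemma stepB_aux: "(q, qs, d) \<in> R \<Longrightarrow> \<forall>i\<in>Ic. norm i d (qs i) \<Longrightarrow>
  \<exists>qs'. (q, qs', d) \<in> R \<and> (\<forall>i\<in>Ic. i < b \<longrightarrow> ready i d (qs' i)) \<and> (\<forall>i. b \<le> i \<longrightarrow> qs' i = qs i)"
proof (induction b)
  case 0
  then show ?case by (intro exI[of _ qs]) auto
next
  case (Suc b)
  then obtain qs' where qs': "(q, qs', d) \<in> R" "\<forall>i\<in>Ic. i < b \<longrightarrow> ready i d (qs' i)" "\<forall>i. b \<le> i \<longrightarrow> qs' i = qs i"
    by blast
  show ?case
  proof (cases "b \<in> Ic")
    case False
    then show ?thesis using qs' by (intro exI[of _ qs']) (auto simp: less_Suc_eq)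
  next
    case True
    then have "norm b d (qs' b)" using qs'(3) Suc.prems by auto
    then obtain x where x: "(q, qs'(b := x), d) \<in> R" "ready b d x" using stepA[OF qs'(1) True] by blast
    have "\<forall>i\<in>Ic. i < Suc b \<longrightarrow> ready i d ((qs'(b := x)) i)" using qs'(2) x(2) by (auto simp: less_Suc_eq)
    moreover have "\<forall>i. Suc b \<le> i \<longrightarrow> (qs'(b := x)) i = qs i" using qs'(3) by auto
    ultimately show ?thesis using x(1) by blast
  qed
qed

lemma stepB: "(q, qs, d) \<in> R \<Longrightarrow> \<forall>i\<in>Ic. norm i d (qs i) \<Longrightarrow>
  \<exists>qs'. (q, qs', d) \<in> R \<and> (\<forall>i\<in>Ic. ready i d (qs' i))"
  using stepB_aux[of q qs d nb] bnd by blast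

lemma ssfin: "i \<in> Ic \<Longrightarrow> ext_delta dH q0 (take (length (ss i)) (ss i)) = Some x \<Longrightarrow> \<sigma> \<in> Gamma_aug dH (No i) x"
  using ssH by auto

lemma matchC:
  assumes i: "i \<in> Ic" and dk: "d < k" and rd: "ready i d (qs i)"
    and c: "caseC1 So No k d i (s ! d) \<or> caseC3 dH So No \<sigma> k d i (qs i) (s ! d)"
  shows "\<exists>l < length (ss i). ss i ! l = s ! d \<and> ext_delta dH q0 (take l (ss i)) = Some (qs i)
           \<and> proj (So i) (take l (ss i)) = proj (So i) (take d s)"
proof -
  let ?e = "s ! d"
  have eo: "?e \<in> So i" using c by (auto simp: caseC1_def caseC3_def)
  have nf: "\<not> frozen i d (qs i)" using c by (auto simp: caseC1_def caseC3_def frozen_def)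
  then obtain l where l: "l \<le> length (ss i)" "ext_delta dH q0 (take l (ss i)) = Some (qs i)"
    "proj (So i) (take l (ss i)) = proj (So i) (take d s)" "l = length (ss i) \<or> ss i ! l \<in> So i"
    using rd by (auto simp: ready_def)
  have PJ: "proj (So i) (ss i) = proj (So i) (take (J i) s)" "int k - int (J i) \<le> int (No i)"
    using projJ i by auto
  have Jd: "d < J i"
  proof (cases "caseC1 So No k d i ?e")
    case True then show ?thesis using PJ(2) by (auto simp: caseC1_def)
  next
    case False
    then have ng: "\<sigma> \<notin> Gamma_aug dH (No i) (qs i)" using c by (auto simp: caseC3_def)
    have "l \<noteq> length (ss i)" using ssfin[OF i] l(2) ng by auto
    then have ll: "l < length (ss i)" "ss i ! l \<in> So i" using l by auto
    have "ss i = take l (ss i) @ (ss i ! l) # drop (Suc l) (ss i)"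
      using ll(1) by (simp add: Cons_nth_drop_Suc)
    then have "proj (So i) (ss i) = proj (So i) (take l (ss i)) @ (ss i ! l) # proj (So i) (drop (Suc l) (ss i))"
      using ll(2) by (metis proj_append proj_Cons)
    then have "length (proj (So i) (take d s)) < length (proj (So i) (take (J i) s))"
      using PJ(1) l(3) by simp
    then show ?thesis using proj_take_mono[of "J i" d "So i" s] by (meson not_less)
  qed
  have ds: "d < length s" using dk lens by simp
  have "take (J i) s = take (Suc d) (take (J i) s) @ drop (Suc d) (take (J i) s)" by (rule append_take_drop_id[symmetric])
  moreover have "take (Suc d) (take (J i) s) = take d s @ [?e]"
    using Jd ds by (simp add: take_Suc_conv_app_nth min_def)
  ultimately have "proj (So i) (take (J i) s) = proj (So i) (take d s) @ ?e # proj (So i) (drop (Suc d) (take (J i) s))"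
    using eo by (metis append.assoc append_Cons append_Nil proj_append proj_Cons proj_Nil)
  moreover have "proj (So i) (ss i) = proj (So i) (take l (ss i)) @ proj (So i) (drop l (ss i))"
    by (metis append_take_drop_id proj_append)
  ultimately have pd: "proj (So i) (drop l (ss i)) = ?e # proj (So i) (drop (Suc d) (take (J i) s))"
    using PJ(1) l(3) by simp
  then have "drop l (ss i) \<noteq> []" by auto
  then have ll: "l < length (ss i)" by simp
  then have dr: "drop l (ss i) = ss i ! l # drop (Suc l) (ss i)" by (simp add: Cons_nth_drop_Suc)
  have "ss i ! l \<in> So i" using l(4) ll by auto
  then have "ss i ! l = ?e" using pd dr by (simp add: proj_Cons)
  then show ?thesis using ll l by blast
qed

lemma stepC:
  assumes R0: "(q, qs, d) \<in> R" and dk: "d < k" and qd: "ext_delta dH q0 (take d s) = Some q"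
    and rd: "\<forall>i\<in>Ic. ready i d (qs i)"
  shows "\<exists>q' qs'. (q', qs', Suc d) \<in> R \<and> ext_delta dH q0 (take (Suc d) s) = Some q' \<and> (\<forall>i\<in>Ic. norm i (Suc d) (qs' i))"
proof -
  let ?e = "s ! d"
  have ds: "d < length s" using dk lens by simp
  obtain q' where q': "dH q ?e = Some q'" "ext_delta dH q0 (take (Suc d) s) = Some q'"
    using ext_take_Suc[OF sH ds qd] by blast
  let ?c = "\<lambda>i. caseC1 So No k d i ?e \<or> caseC3 dH So No \<sigma> k d i (qs i) ?e"
  let ?qs' = "\<lambda>i. if i \<in> Ic \<and> ?c i then the (dH (qs i) ?e) else qs i"
  have side: "\<forall>i\<in>Ic. ?c i \<longrightarrow> dH (qs i) ?e \<noteq> None"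
  proof (intro ballI impI)
    fix i assume i: "i \<in> Ic" and ci: "?c i"
    then obtain l where l: "l < length (ss i)" "ss i ! l = ?e" "ext_delta dH q0 (take l (ss i)) = Some (qs i)"
      using matchC[OF i dk] rd by blast
    then show "dH (qs i) ?e \<noteq> None" using ext_take_Suc[OF ssD[OF i] l(1) l(3)] by auto
  qed
  have R1: "(q', ?qs', Suc d) \<in> R"
    using verif_reach.type1[OF R0 _ q'(1) side] dk by simp
  have "\<forall>i\<in>Ic. norm i (Suc d) (?qs' i)"
  proof
    fix i assume i: "i \<in> Ic"
    have tS: "take (Suc d) s = take d s @ [?e]" using ds by (simp add: take_Suc_conv_app_nth)
    show "norm i (Suc d) (?qs' i)"
    proof (cases "?c i")
      case True
      then have eo: "?e \<in> So i" by (auto simp: caseC1_def caseC3_def)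
      obtain l where l: "l < length (ss i)" "ss i ! l = ?e" "ext_delta dH q0 (take l (ss i)) = Some (qs i)"
        "proj (So i) (take l (ss i)) = proj (So i) (take d s)"
        using matchC[OF i dk] rd True i by blast
      obtain y where y: "dH (qs i) ?e = Some y" "ext_delta dH q0 (take (Suc l) (ss i)) = Some y"
        using ext_take_Suc[OF ssD[OF i] l(1) l(3)] l(2) by auto
      have "proj (So i) (take (Suc l) (ss i)) = proj (So i) (take (Suc d) s)"
        using l tS eo by (simp add: take_Suc_conv_app_nth proj_def)
      then show ?thesis using y True i l(1) unfolding norm_def
        by (intro disjI2 exI[of _ "Suc l"]) auto
    next
      case False
      then have qq: "?qs' i = qs i" by simp
      show ?thesis
      proof (cases "frozen i d (qs i)")
        case True
        then show ?thesis using qq by (auto simp: norm_def frozen_def)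
      next
        case nf: False
        then obtain l where l: "l \<le> length (ss i)" "ext_delta dH q0 (take l (ss i)) = Some (qs i)"
          "proj (So i) (take l (ss i)) = proj (So i) (take d s)"
          using rd i by (auto simp: ready_def)
        show ?thesis
        proof (cases "?e \<in> So i")
          case True
          then have "frozen i (Suc d) (qs i)" using False by (auto simp: caseC1_def caseC3_def frozen_def)
          then show ?thesis using qq by (simp add: norm_def)
        next
          case eu: False
          then have "proj (So i) (take (Suc d) s) = proj (So i) (take d s)" using tS by (simp add: proj_def)
          then show ?thesis using qq l unfolding norm_def by (intro disjI2 exI[of _ l]) auto
        qed
      qed
    qed
  qed
  then show ?thesis using R1 q'(2) by blast
qed

lemma stepD: "d \<le> k \<Longrightarrow> \<exists>q qs. (q, qs, d) \<in> R \<and> ext_delta dH q0 (take d s) = Some q \<and> (\<forall>i\<in>Ic. norm i d (qs i))"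
proof (induction d)
  case 0
  have "(q0, (\<lambda>i. q0), 0) \<in> R" by (rule verif_reach.init)
  moreover have "\<forall>i\<in>Ic. norm i 0 q0" unfolding norm_def by (auto intro!: exI[of _ 0])
  ultimately show ?case by auto
next
  case (Suc d)
  then obtain q qs where a: "(q, qs, d) \<in> R" "ext_delta dH q0 (take d s) = Some q" "\<forall>i\<in>Ic. norm i d (qs i)"
    by auto
  obtain qs' where "(q, qs', d) \<in> R" "\<forall>i\<in>Ic. ready i d (qs' i)" using stepB[OF a(1) a(3)] by blast
  then show ?case using stepC[OF _ _ a(2)] Suc.prems by simp
qed

lemma final: "\<exists>q qs. (q, qs, k) \<in> R \<and> ext_delta dH q0 s = Some q \<and> (\<forall>i\<in>Ic. \<sigma> \<in> Gamma_aug dH (No i) (qs i))"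
proof -
  obtain q qs where a: "(q, qs, k) \<in> R" "ext_delta dH q0 (take k s) = Some q" "\<forall>i\<in>Ic. norm i k (qs i)"
    using stepD by blast
  obtain qs' where b: "(q, qs', k) \<in> R" "\<forall>i\<in>Ic. ready i k (qs' i)" using stepB[OF a(1) a(3)] by blast
  have "\<forall>i\<in>Ic. \<sigma> \<in> Gamma_aug dH (No i) (qs' i)"
  proof
    fix i assume i: "i \<in> Ic"
    show "\<sigma> \<in> Gamma_aug dH (No i) (qs' i)"
    proof (cases "frozen i k (qs' i)")
      case True then show ?thesis by (simp add: frozen_def)
    next
      case False
      then obtain l where l: "l \<le> length (ss i)" "ext_delta dH q0 (take l (ss i)) = Some (qs' i)"
        "proj (So i) (take l (ss i)) = proj (So i) (take k s)" "l = length (ss i) \<or> ss i ! l \<in> So i"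
        using b(2) i by (auto simp: ready_def)
      show ?thesis
      proof (cases "l = length (ss i)")
        case True then show ?thesis using ssfin[OF i] l(2) by simp
      next
        case False
        then have ll: "l < length (ss i)" "ss i ! l \<in> So i" using l by auto
        have "ss i = take l (ss i) @ (ss i ! l) # drop (Suc l) (ss i)"
          using ll(1) by (simp add: Cons_nth_drop_Suc)
        then have "proj (So i) (ss i) = proj (So i) (take l (ss i)) @ (ss i ! l) # proj (So i) (drop (Suc l) (ss i))"
          using ll(2) by (metis proj_append proj_Cons)
        then have "length (proj (So i) s) < length (proj (So i) (take (J i) s))"
          using projJ i l(3) lens by simp
        then show ?thesis using proj_take_len[of "So i" "J i" s] by simp
      qed
    qed
  qed
  then show ?thesis using b(1) a(2) lens by auto
qed

end

theorem proposition1: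
  fixes \<delta> :: "'q::finite \<Rightarrow> 'e::finite \<Rightarrow> 'q option"
    and q0 :: 'q and QH :: "'q set"
    and n :: nat
    and So Sc :: "nat \<Rightarrow> 'e set" and No :: "nat \<Rightarrow> nat"
    and \<sigma> :: 'e and k :: nat
  assumes "q0 \<in> QH"
    and "\<sigma> \<in> (\<Union>i\<in>{1..n}. Sc i)"
    and "k < Max (No ` {i \<in> {1..n}. \<sigma> \<in> Sc i})"
  shows "(\<forall>s \<in> lang (sub_delta \<delta> QH) q0. length s = k \<longrightarrow>
            s @ [\<sigma>] \<in> lang \<delta> q0 - lang (sub_delta \<delta> QH) q0 \<longrightarrow>
            (\<forall>ss \<in> T_conf So No {i \<in> {1..n}. \<sigma> \<in> Sc i} s.
               \<exists>i \<in> {i \<in> {1..n}. \<sigma> \<in> Sc i}.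
                 ss i @ [\<sigma>] \<notin> lang_aug (sub_delta \<delta> QH) q0 (No i)))
     \<longleftrightarrow>
     \<not> (\<exists>q qs. (q, qs, k) \<in> verif_reach (sub_delta \<delta> QH) q0 So No {i \<in> {1..n}. \<sigma> \<in> Sc i} \<sigma> k
              \<and> \<sigma> \<in> active \<delta> q - active (sub_delta \<delta> QH) q
              \<and> (\<forall>i \<in> {i \<in> {1..n}. \<sigma> \<in> Sc i}. \<sigma> \<in> Gamma_aug (sub_delta \<delta> QH) (No i) (qs i)))"
  (is "?A \<longleftrightarrow> \<not> ?B")
proof -
  define Ic where "Ic = {i \<in> {1..n}. \<sigma> \<in> Sc i}"
  define dH where "dH = sub_delta \<delta> QH"
  have snoc_lang: "\<And>d q. ext_delta d q0 s = Some q \<Longrightarrow> (s @ [\<sigma>] \<in> lang d q0 \<longleftrightarrow> d q \<sigma> \<noteq> None)" for s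
    by (simp add: lang_def ext_snoc)
  show ?thesis
  proof
    assume A: ?A
    show "\<not> ?B"
    proof
      assume ?B
      then obtain q qs where R: "(q, qs, k) \<in> verif_reach dH q0 So No Ic \<sigma> k"
        and act: "\<sigma> \<in> active \<delta> q - active dH q"
        and G: "\<forall>i\<in>Ic. \<sigma> \<in> Gamma_aug dH (No i) (qs i)"
        unfolding Ic_def dH_def by blast
      obtain s where s: "length s = k" "ext_delta dH q0 s = Some q"
        and T: "\<forall>i\<in>Ic. \<exists>t. ext_delta dH q0 t = Some (qs i) \<and>
        (proj (So i) t = proj (So i) s \<or>
         (\<sigma> \<in> Gamma_aug dH (No i) (qs i) \<and>
          (\<exists>j\<le>k. int k - int j \<le> int (No i) \<and> proj (So i) t = proj (So i) (take j s))))"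
        using inv[OF R] by blast
      from bchoice[OF T] obtain ss where ss: "\<forall>i\<in>Ic. ext_delta dH q0 (ss i) = Some (qs i) \<and>
        (proj (So i) (ss i) = proj (So i) s \<or>
         (\<sigma> \<in> Gamma_aug dH (No i) (qs i) \<and>
          (\<exists>j\<le>k. int k - int j \<le> int (No i) \<and> proj (So i) (ss i) = proj (So i) (take j s))))"
        by blast
      have sL: "s \<in> lang dH q0" using s by (simp add: lang_def)
      have sG: "ext_delta \<delta> q0 s = Some q" using s(2) unfolding dH_def by (rule sub_ext)
      have sD: "s @ [\<sigma>] \<in> lang \<delta> q0 - lang dH q0"
        using act snoc_lang[OF sG] snoc_lang[OF s(2)] by (simp add: active_def)
      have TC: "ss \<in> T_conf So No Ic s"
        unfolding T_conf_def Theta_def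
      proof (rule CollectI, rule ballI)
        fix i assume i: "i \<in> Ic"
        show "proj (So i) (ss i) \<in> {proj (So i) (trunc s m) |m. m \<le> No i}"
        proof (cases "proj (So i) (ss i) = proj (So i) s")
          case True
          then show ?thesis by (auto simp: trunc_def intro!: exI[of _ 0])
        next
          case False
          then obtain j where "j \<le> k" "int k - int j \<le> int (No i)" "proj (So i) (ss i) = proj (So i) (take j s)"
            using ss i by blast
          then show ?thesis using s(1) by (auto simp: trunc_def intro!: exI[of _ "k - j"])
        qed
      qed
      have "\<forall>i\<in>Ic. ss i @ [\<sigma>] \<in> lang_aug dH q0 (No i)"
        using ss G by (auto simp: lang_aug_snoc)
      then show False using A sL s(1) sD TC unfolding Ic_def dH_def by blast
    qed
  next
    assume nB: "\<not> ?B"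
    show ?A
    proof (intro ballI impI, rule ccontr)
      fix s ss
      assume sL: "s \<in> lang (sub_delta \<delta> QH) q0" and len: "length s = k"
        and sD: "s @ [\<sigma>] \<in> lang \<delta> q0 - lang (sub_delta \<delta> QH) q0"
        and TC: "ss \<in> T_conf So No {i \<in> {1..n}. \<sigma> \<in> Sc i} s"
        and nE: "\<not> (\<exists>i\<in>{i \<in> {1..n}. \<sigma> \<in> Sc i}. ss i @ [\<sigma>] \<notin> lang_aug (sub_delta \<delta> QH) q0 (No i))"
      have E: "\<forall>i\<in>Ic. \<exists>m. m \<le> No i \<and> proj (So i) (ss i) = proj (So i) (trunc s m)"
        using TC unfolding T_conf_def Theta_def Ic_def by blast
      from bchoice[OF E] obtain M where M: "\<forall>i\<in>Ic. M i \<le> No i \<and> proj (So i) (ss i) = proj (So i) (trunc s (M i))"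
        by blast
      have ssH: "\<forall>i\<in>Ic. \<exists>x. ext_delta dH q0 (ss i) = Some x \<and> \<sigma> \<in> Gamma_aug dH (No i) x"
        using nE unfolding Ic_def dH_def by (auto simp: lang_aug_snoc)
      have projJ: "\<forall>i\<in>Ic. proj (So i) (ss i) = proj (So i) (take (k - M i) s) \<and> int k - int (k - M i) \<le> int (No i)"
        using M len by (auto simp: trunc_def)
      have sH: "ext_delta dH q0 s \<noteq> None" using sL unfolding dH_def by (simp add: lang_def)
      have bnd: "\<forall>i\<in>Ic. i < Suc n" unfolding Ic_def by auto
      interpret dir2 dH q0 So No Ic \<sigma> k s ss "\<lambda>i. k - M i" "Suc n"
        using len sH ssH projJ bnd by unfold_locales auto
      obtain q qs where F: "(q, qs, k) \<in> verif_reach dH q0 So No Ic \<sigma> k" "ext_delta dH q0 s = Some q"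
        "\<forall>i\<in>Ic. \<sigma> \<in> Gamma_aug dH (No i) (qs i)"
        using final by blast
      have sG: "ext_delta \<delta> q0 s = Some q" using F(2) unfolding dH_def by (rule sub_ext)
      have "\<sigma> \<in> active \<delta> q - active dH q"
        using sD snoc_lang[OF sG] snoc_lang[OF F(2)] unfolding dH_def by (simp add: active_def)
      then show False using nB F unfolding Ic_def dH_def by blast
    qed
  qed
qed

end
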